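(* With $H$ and the induced comodules as in the context, let $f\in F$, let $V$ be a simple right $\Bbbk^{G_f}_{\tau_f}$-comodule and $\tilde V=(V\otimes\Bbbk f)\Box_{H'_f}H$ the induced right $H$-comodule. If $\tilde V^*\cong\tilde V$, then $G_{f,f^{-1}}=\{g\in G\mid g\triangleright f=f^{-1}\}\neq\emptyset$.
   Context: Standing setup: $\Bbbk$ is an algebraically closed field of characteristic $0$, $F$ a group (possibly infinite), $G$ a finite group, and $(F,G,\triangleleft,\triangleright)$ a matched pair: $\triangleright:G\times F\to F$ a left action of $G$ on the set $F$, $\triangleleft:G\times F\to G$ a right action of $F$ on the set $G$, with $g\triangleright(ff')=(g\triangleright f)((g\triangleleft f)\triangleright f')$ and $(gg')\triangleleft f=(g\triangleleft(g'\triangleright f))(g'\triangleleft f)$. Maps $\sigma:G\times F\times F\to\Bbbk^\times$ and $\tau:G\times G\times F\to\Bbbk^\times$ satisfy: $\sigma(g;1_F,f)=\sigma(g;f,1_F)=\sigma(1_G;f,f')=1$; $\sigma(g\triangleleft f;f',f'')\sigma(g;f,f'f'')=\sigma(g;f,f')\sigma(g;ff',f'')$; $\tau(1_G,g;f)=\tau(g,1_G;f)=\tau(g,g';1_F)=1$; $\tau(g,g';g''\triangleright f)\tau(gg',g'';f)=\tau(g,g'g'';f)\tau(g',g'';f)$; and $\sigma(gg';f,f')\tau(g,g';ff')=\sigma(g;g'\triangleright f,(g'\triangleleft f)\triangleright f')\sigma(g';f,f')\tau(g,g';f)\tau(g\triangleleft(g'\triangleright f),g'\triangleleft f;f')$.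 $H=\Bbbk^G{}^\tau\#_\sigma\Bbbk F$ has basis $\{p_g\#f\}$, product $(p_g\#f)(p_{g'}\#f')=\delta_{g\triangleleft f,g'}\sigma(g;f,f')p_g\#ff'$, coproduct $\Delta(p_g\#f)=\sum_{x\in G}\tau(gx^{-1},x;f)\,p_{gx^{-1}}\#(x\triangleright f)\otimes p_x\#f$, counit $\varepsilon(p_g\#f)=\delta_{g,1_G}$, antipode $S(p_g\#f)=\sigma(g^{-1};g\triangleright f,(g\triangleright f)^{-1})^{-1}\tau(g^{-1},g;f)^{-1}p_{(g\triangleleft f)^{-1}}\#(g\triangleright f)^{-1}$. $G_f=\{g\in G\mid g\triangleright f=f\}$; $\Bbbk^{G_f}_{\tau_f}$ is the coalgebra with basis $\{p_g\}_{g\in G_f}$, $\Delta(p_g)=\sum_{x\in G_f}\tau(gx^{-1},x;f)p_{gx^{-1}}\otimes p_x$, $\varepsilon(p_g)=\delta_{g,1_G}$; $H'_f$ is the coalgebra with basis $\{p_g\#f'\mid g\in G_f,f'\in F\}$, $\Delta(p_g\#f')=\sum_{x\in G_f}\tau(gx^{-1},x;f')p_{gx^{-1}}\#(x\triangleright f')\otimes p_x\#f'$; $H$ is a left $H'_f$-comodule via $(\pi_f\otimes\mathrm{id})\Delta$ ($\pi_f$ kills $p_g\#f'$, $g\notin G_f$). $V\otimes\Bbbk f$ is a right $H'_f$-comodule via $v\otimes f\mapsto\sum_gv_g\otimes f\otimes p_g\#f$ where $\rho(v)=\sum_{g\in G_f}v_g\otimes p_g$; $\tilde V$ is the cotensor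 product with right $H$-coaction $\mathrm{id}\otimes\Delta$, and $\tilde V^*$ its dual comodule. *)

theory Defs
  imports "HOL-Algebra.Group" "HOL-Computational_Algebra.Polynomial" "HOL-Library.Function_Algebras"
begin

definition alg_closed_field :: "'k::field itself \<Rightarrow> bool" where
  "alg_closed_field _ \<longleftrightarrow> (\<forall>p :: 'k poly. degree p \<ge> 1 \<longrightarrow> (\<exists>x. poly p x = 0))"

text \<open>Every k-vector space is isomorphic to a subspace of some function space
  'c => k (with pointwise operations); vectors are represented that way.\<close>

definition sc :: "'k::field \<Rightarrow> ('c \<Rightarrow> 'k) \<Rightarrow> ('c \<Rightarrow> 'k)" where
  "sc c v = (\<lambda>x. c * v x)"

definition subspace :: "('c \<Rightarrow> 'k::field) set \<Rightarrow> bool" where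
  "subspace W \<longleftrightarrow> 0 \<in> W \<and> (\<forall>v\<in>W. \<forall>w\<in>W. v + w \<in> W) \<and> (\<forall>c. \<forall>v\<in>W. sc c v \<in> W)"

text \<open>A coalgebra C with basis B (indexed by type 'b) is given by the structure constants
  Dc b b1 b2 of the coproduct, Delta(b) = sum Dc b b1 b2 (b1 (x) b2), and the counit eps.
  For a right C-comodule W (a subspace of 'c => k), W (x) C is identified with finitely
  supported functions B => W; the coaction rho w = sum_b (rho w b) (x) b.\<close>

definition vsupp :: "('b \<Rightarrow> ('c \<Rightarrow> 'k::zero)) \<Rightarrow> 'b set" where
  "vsupp X = {b. X b \<noteq> 0}"

definition is_linear_map :: "('c \<Rightarrow> 'k::field) set \<Rightarrow> (('c \<Rightarrow> 'k) \<Rightarrow> ('d \<Rightarrow> 'k)) \<Rightarrow> bool" where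
  "is_linear_map W T \<longleftrightarrow> (\<forall>v\<in>W. \<forall>w\<in>W. T (v + w) = T v + T w) \<and> (\<forall>c. \<forall>w\<in>W. T (sc c w) = sc c (T w))"

definition is_linear_functional :: "('c \<Rightarrow> 'k::field) set \<Rightarrow> (('c \<Rightarrow> 'k) \<Rightarrow> 'k) \<Rightarrow> bool" where
  "is_linear_functional W \<phi> \<longleftrightarrow> (\<forall>v\<in>W. \<forall>w\<in>W. \<phi> (v + w) = \<phi> v + \<phi> w) \<and> (\<forall>c. \<forall>w\<in>W. \<phi> (sc c w) = c * \<phi> w)"

definition right_comodule ::
  "'b set \<Rightarrow> ('b \<Rightarrow> 'b \<Rightarrow> 'b \<Rightarrow> 'k::field) \<Rightarrow> ('b \<Rightarrow> 'k) \<Rightarrow> ('c \<Rightarrow> 'k) set \<Rightarrow> (('c \<Rightarrow> 'k) \<Rightarrow> 'b \<Rightarrow> ('c \<Rightarrow> 'k)) \<Rightarrow> bool" where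
  "right_comodule B Dc eps W rho \<longleftrightarrow>
     subspace W \<and>
     (\<forall>w\<in>W. finite (vsupp (rho w)) \<and> vsupp (rho w) \<subseteq> B \<and> (\<forall>b. rho w b \<in> W)) \<and>
     (\<forall>v\<in>W. \<forall>w\<in>W. \<forall>b. rho (v + w) b = rho v b + rho w b) \<and>
     (\<forall>c. \<forall>w\<in>W. \<forall>b. rho (sc c w) b = sc c (rho w b)) \<and>
     (\<forall>w\<in>W. (\<Sum>b\<in>vsupp (rho w). sc (eps b) (rho w b)) = w) \<and>
     (\<forall>w\<in>W. \<forall>b1 b2. rho (rho w b1) b2 = (\<Sum>b\<in>vsupp (rho w). sc (Dc b b2 b1) (rho w b)))"

definition subcomodule :: "('c \<Rightarrow> 'k::field) set \<Rightarrow> (('c \<Rightarrow> 'k) \<Rightarrow> 'b \<Rightarrow> ('c \<Rightarrow> 'k)) \<Rightarrow> ('c \<Rightarrow> 'k) set \<Rightarrow> bool" where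
  "subcomodule W rho U \<longleftrightarrow> subspace U \<and> U \<subseteq> W \<and> (\<forall>u\<in>U. \<forall>b. rho u b \<in> U)"

definition simple_right_comodule ::
  "'b set \<Rightarrow> ('b \<Rightarrow> 'b \<Rightarrow> 'b \<Rightarrow> 'k::field) \<Rightarrow> ('b \<Rightarrow> 'k) \<Rightarrow> ('c \<Rightarrow> 'k) set \<Rightarrow> (('c \<Rightarrow> 'k) \<Rightarrow> 'b \<Rightarrow> ('c \<Rightarrow> 'k)) \<Rightarrow> bool" where
  "simple_right_comodule B Dc eps W rho \<longleftrightarrow>
     right_comodule B Dc eps W rho \<and> W \<noteq> {0} \<and>
     (\<forall>U. subcomodule W rho U \<longrightarrow> U = {0} \<or> U = W)"

definition comodule_iso ::
  "('c \<Rightarrow> 'k::field) set \<Rightarrow> (('c \<Rightarrow> 'k) \<Rightarrow> 'b \<Rightarrow> ('c \<Rightarrow> 'k)) \<Rightarrow>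
   ('d \<Rightarrow> 'k) set \<Rightarrow> (('d \<Rightarrow> 'k) \<Rightarrow> 'b \<Rightarrow> ('d \<Rightarrow> 'k)) \<Rightarrow> bool" where
  "comodule_iso W1 rho1 W2 rho2 \<longleftrightarrow>
     (\<exists>T. bij_betw T W1 W2 \<and> is_linear_map W1 T \<and> (\<forall>w\<in>W1. \<forall>b. T (rho1 w b) = rho2 (T w) b))"

text \<open>Dual comodule of a (finite-dimensional) right comodule W over a Hopf algebra whose
  antipode has structure constants Sc (S(b') = sum_b Sc b' b  b):
  W* = linear functionals on W (extended by 0 outside W), with
  <phi_0, w> phi_1 = <phi, w_0> S(w_1).\<close>
definition dual_space :: "('c \<Rightarrow> 'k::field) set \<Rightarrow> ((('c \<Rightarrow> 'k) \<Rightarrow> 'k)) set" where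
  "dual_space W = {\<phi>. is_linear_functional W \<phi> \<and> (\<forall>x. x \<notin> W \<longrightarrow> \<phi> x = 0)}"

definition dual_coaction ::
  "('b \<Rightarrow> 'b \<Rightarrow> 'k::field) \<Rightarrow> ('c \<Rightarrow> 'k) set \<Rightarrow> (('c \<Rightarrow> 'k) \<Rightarrow> 'b \<Rightarrow> ('c \<Rightarrow> 'k)) \<Rightarrow>
   (('c \<Rightarrow> 'k) \<Rightarrow> 'k) \<Rightarrow> 'b \<Rightarrow> (('c \<Rightarrow> 'k) \<Rightarrow> 'k)" where
  "dual_coaction Sc W rho \<phi> b =
     (\<lambda>w. if w \<in> W then (\<Sum>b'\<in>vsupp (rho w). \<phi> (rho w b') * Sc b' b) else 0)"

definition matched_pair_data ::
  "('f, 'x) monoid_scheme \<Rightarrow> ('g, 'y) monoid_scheme \<Rightarrow> ('g \<Rightarrow> 'f \<Rightarrow> 'f) \<Rightarrow> ('g \<Rightarrow> 'f \<Rightarrow> 'g) \<Rightarrow>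
   ('g \<Rightarrow> 'f \<Rightarrow> 'f \<Rightarrow> 'k::field) \<Rightarrow> ('g \<Rightarrow> 'g \<Rightarrow> 'f \<Rightarrow> 'k) \<Rightarrow> bool" where
  "matched_pair_data F G act ract \<sigma> \<tau> \<longleftrightarrow>
     group F \<and> group G \<and> finite (carrier G) \<and>
     \<comment> \<open>left action of G on the set F\<close>
     (\<forall>g\<in>carrier G. \<forall>f\<in>carrier F. act g f \<in> carrier F) \<and>
     (\<forall>f\<in>carrier F. act \<one>\<^bsub>G\<^esub> f = f) \<and>
     (\<forall>g\<in>carrier G. \<forall>g'\<in>carrier G. \<forall>f\<in>carrier F. act (g \<otimes>\<^bsub>G\<^esub> g') f = act g (act g' f)) \<and>
     \<comment> \<open>right action of F on the set G\<close>
     (\<forall>g\<in>carrier G. \<forall>f\<in>carrier F. ract g f \<in> carrier G) \<and>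
     (\<forall>g\<in>carrier G. ract g \<one>\<^bsub>F\<^esub> = g) \<and>
     (\<forall>g\<in>carrier G. \<forall>f\<in>carrier F. \<forall>f'\<in>carrier F. ract g (f \<otimes>\<^bsub>F\<^esub> f') = ract (ract g f) f') \<and>
     \<comment> \<open>matched pair compatibilities\<close>
     (\<forall>g\<in>carrier G. \<forall>f\<in>carrier F. \<forall>f'\<in>carrier F.
        act g (f \<otimes>\<^bsub>F\<^esub> f') = act g f \<otimes>\<^bsub>F\<^esub> act (ract g f) f') \<and>
     (\<forall>g\<in>carrier G. \<forall>g'\<in>carrier G. \<forall>f\<in>carrier F.
        ract (g \<otimes>\<^bsub>G\<^esub> g') f = ract g (act g' f) \<otimes>\<^bsub>G\<^esub> ract g' f) \<and>
     \<comment> \<open>sigma\<close>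
     (\<forall>g\<in>carrier G. \<forall>f\<in>carrier F. \<forall>f'\<in>carrier F. \<sigma> g f f' \<noteq> 0) \<and>
     (\<forall>g\<in>carrier G. \<forall>f\<in>carrier F. \<sigma> g \<one>\<^bsub>F\<^esub> f = 1 \<and> \<sigma> g f \<one>\<^bsub>F\<^esub> = 1) \<and>
     (\<forall>f\<in>carrier F. \<forall>f'\<in>carrier F. \<sigma> \<one>\<^bsub>G\<^esub> f f' = 1) \<and>
     (\<forall>g\<in>carrier G. \<forall>f\<in>carrier F. \<forall>f'\<in>carrier F. \<forall>f''\<in>carrier F.
        \<sigma> (ract g f) f' f'' * \<sigma> g f (f' \<otimes>\<^bsub>F\<^esub> f'') = \<sigma> g f f' * \<sigma> g (f \<otimes>\<^bsub>F\<^esub> f') f'') \<and>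
     \<comment> \<open>tau\<close>
     (\<forall>g\<in>carrier G. \<forall>g'\<in>carrier G. \<forall>f\<in>carrier F. \<tau> g g' f \<noteq> 0) \<and>
     (\<forall>g\<in>carrier G. \<forall>f\<in>carrier F. \<tau> \<one>\<^bsub>G\<^esub> g f = 1 \<and> \<tau> g \<one>\<^bsub>G\<^esub> f = 1) \<and>
     (\<forall>g\<in>carrier G. \<forall>g'\<in>carrier G. \<tau> g g' \<one>\<^bsub>F\<^esub> = 1) \<and>
     (\<forall>g\<in>carrier G. \<forall>g'\<in>carrier G. \<forall>g''\<in>carrier G. \<forall>f\<in>carrier F.
        \<tau> g g' (act g'' f) * \<tau> (g \<otimes>\<^bsub>G\<^esub> g') g'' f = \<tau> g (g' \<otimes>\<^bsub>G\<^esub> g'') f * \<tau> g' g'' f) \<and>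
     \<comment> \<open>compatibility of sigma and tau\<close>
     (\<forall>g\<in>carrier G. \<forall>g'\<in>carrier G. \<forall>f\<in>carrier F. \<forall>f'\<in>carrier F.
        \<sigma> (g \<otimes>\<^bsub>G\<^esub> g') f f' * \<tau> g g' (f \<otimes>\<^bsub>F\<^esub> f') =
        \<sigma> g (act g' f) (act (ract g' f) f') * \<sigma> g' f f' * \<tau> g g' f *
        \<tau> (ract g (act g' f)) (ract g' f) f')"

text \<open>Basis of H = k^G{tau} #_sigma kF: the elements p_g # f, indexed by (g,f).\<close>
definition H_basis :: "('f, 'x) monoid_scheme \<Rightarrow> ('g, 'y) monoid_scheme \<Rightarrow> ('g \<times> 'f) set" where
  "H_basis F G = carrier G \<times> carrier F"

text \<open>Coproduct structure constants of H:
  Delta(p_g # f) = sum_{x in G} tau(g x^-1, x; f) p_{g x^-1} # (x |> f) (x) p_x # f.\<close>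
definition H_Dc ::
  "('f, 'x) monoid_scheme \<Rightarrow> ('g, 'y) monoid_scheme \<Rightarrow> ('g \<Rightarrow> 'f \<Rightarrow> 'f) \<Rightarrow> ('g \<Rightarrow> 'g \<Rightarrow> 'f \<Rightarrow> 'k::field) \<Rightarrow>
   'g \<times> 'f \<Rightarrow> 'g \<times> 'f \<Rightarrow> 'g \<times> 'f \<Rightarrow> 'k" where
  "H_Dc F G act \<tau> b b1 b2 =
     (if b \<in> H_basis F G \<and> b1 \<in> H_basis F G \<and> b2 \<in> H_basis F G \<and>
         fst b1 = fst b \<otimes>\<^bsub>G\<^esub> inv\<^bsub>G\<^esub> (fst b2) \<and> snd b1 = act (fst b2) (snd b) \<and> snd b2 = snd b
      then \<tau> (fst b1) (fst b2) (snd b) else 0)"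

text \<open>Antipode structure constants of H:
  S(p_g # f) = sigma(g^-1; g|>f, (g|>f)^-1)^-1 tau(g^-1, g; f)^-1 p_{(g<|f)^-1} # (g|>f)^-1.\<close>
definition H_Sc ::
  "('f, 'x) monoid_scheme \<Rightarrow> ('g, 'y) monoid_scheme \<Rightarrow> ('g \<Rightarrow> 'f \<Rightarrow> 'f) \<Rightarrow> ('g \<Rightarrow> 'f \<Rightarrow> 'g) \<Rightarrow>
   ('g \<Rightarrow> 'f \<Rightarrow> 'f \<Rightarrow> 'k::field) \<Rightarrow> ('g \<Rightarrow> 'g \<Rightarrow> 'f \<Rightarrow> 'k) \<Rightarrow> 'g \<times> 'f \<Rightarrow> 'g \<times> 'f \<Rightarrow> 'k" where
  "H_Sc F G act ract \<sigma> \<tau> b b' =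
     (let g = fst b; f = snd b in
      if b \<in> H_basis F G \<and> b' = (inv\<^bsub>G\<^esub> (ract g f), inv\<^bsub>F\<^esub> (act g f))
      then inverse (\<sigma> (inv\<^bsub>G\<^esub> g) (act g f) (inv\<^bsub>F\<^esub> (act g f)) * \<tau> (inv\<^bsub>G\<^esub> g) g f)
      else 0)"

definition stab :: "('f, 'x) monoid_scheme \<Rightarrow> ('g, 'y) monoid_scheme \<Rightarrow> ('g \<Rightarrow> 'f \<Rightarrow> 'f) \<Rightarrow> 'f \<Rightarrow> 'g set" where
  "stab F G act f = {g \<in> carrier G. act g f = f}"

text \<open>Delta(p_g) = sum_{x in G_f} tau(g x^-1, x; f) p_{g x^-1} (x) p_x.\<close>
definition Gf_Dc ::
  "('f, 'x) monoid_scheme \<Rightarrow> ('g, 'y) monoid_scheme \<Rightarrow> ('g \<Rightarrow> 'f \<Rightarrow> 'f) \<Rightarrow> ('g \<Rightarrow> 'g \<Rightarrow> 'f \<Rightarrow> 'k::field) \<Rightarrow>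
   'f \<Rightarrow> 'g \<Rightarrow> 'g \<Rightarrow> 'g \<Rightarrow> 'k" where
  "Gf_Dc F G act \<tau> f g a x =
     (if g \<in> stab F G act f \<and> a \<in> stab F G act f \<and> x \<in> stab F G act f \<and> a = g \<otimes>\<^bsub>G\<^esub> inv\<^bsub>G\<^esub> x
      then \<tau> a x f else 0)"

definition Gf_eps :: "('g, 'y) monoid_scheme \<Rightarrow> 'g \<Rightarrow> 'k::field" where
  "Gf_eps G g = (if g = \<one>\<^bsub>G\<^esub> then 1 else 0)"

definition Hf_basis :: "('f, 'x) monoid_scheme \<Rightarrow> ('g, 'y) monoid_scheme \<Rightarrow> ('g \<Rightarrow> 'f \<Rightarrow> 'f) \<Rightarrow> 'f \<Rightarrow> ('g \<times> 'f) set" where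
  "Hf_basis F G act f = stab F G act f \<times> carrier F"

text \<open>Left H'_f-coaction on H, (pi_f (x) id) Delta, via structure constants:
  lambda(b) = sum_{c, b'} Hl c b' (c (x) b').\<close>
definition H_left_Hf ::
  "('f, 'x) monoid_scheme \<Rightarrow> ('g, 'y) monoid_scheme \<Rightarrow> ('g \<Rightarrow> 'f \<Rightarrow> 'f) \<Rightarrow> ('g \<Rightarrow> 'g \<Rightarrow> 'f \<Rightarrow> 'k::field) \<Rightarrow>
   'f \<Rightarrow> 'g \<times> 'f \<Rightarrow> 'g \<times> 'f \<Rightarrow> 'g \<times> 'f \<Rightarrow> 'k" where
  "H_left_Hf F G act \<tau> f b c b' = (if c \<in> Hf_basis F G act f then H_Dc F G act \<tau> b c b' else 0)"

text \<open>Since kf is one-dimensional, V (x) kf is identified with V (v (x) f <-> v); its right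
  H'_f-coaction is v (x) f |-> sum_g v_g (x) f (x) p_g # f.
  Elements of (V (x) kf) (x) H are finitely supported functions from the basis of H into V;
  such a function X is encoded as Y :: ((g,f),a) => k with slice Y b = X b.\<close>

definition slice :: "('b \<times> 'a \<Rightarrow> 'k) \<Rightarrow> 'b \<Rightarrow> ('a \<Rightarrow> 'k)" where
  "slice Y b = (\<lambda>a. Y (b, a))"

definition Vf_coaction ::
  "'f \<Rightarrow> (('a \<Rightarrow> 'k::field) \<Rightarrow> 'g \<Rightarrow> ('a \<Rightarrow> 'k)) \<Rightarrow> ('a \<Rightarrow> 'k) \<Rightarrow> 'g \<times> 'f \<Rightarrow> ('a \<Rightarrow> 'k)" where
  "Vf_coaction f rho v c = (if snd c = f then rho v (fst c) else 0)"

definition induced_space ::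
  "('f, 'x) monoid_scheme \<Rightarrow> ('g, 'y) monoid_scheme \<Rightarrow> ('g \<Rightarrow> 'f \<Rightarrow> 'f) \<Rightarrow> ('g \<Rightarrow> 'g \<Rightarrow> 'f \<Rightarrow> 'k::field) \<Rightarrow>
   'f \<Rightarrow> ('a \<Rightarrow> 'k) set \<Rightarrow> (('a \<Rightarrow> 'k) \<Rightarrow> 'g \<Rightarrow> ('a \<Rightarrow> 'k)) \<Rightarrow> (('g \<times> 'f) \<times> 'a \<Rightarrow> 'k) set" where
  "induced_space F G act \<tau> f V rho =
     {Y. (\<forall>b. slice Y b \<in> V) \<and> finite (vsupp (slice Y)) \<and> vsupp (slice Y) \<subseteq> H_basis F G \<and>
         (\<forall>c\<in>Hf_basis F G act f. \<forall>b'\<in>H_basis F G.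
            Vf_coaction f rho (slice Y b') c =
            (\<Sum>b\<in>vsupp (slice Y). sc (H_left_Hf F G act \<tau> f b c b') (slice Y b)))}"

definition induced_coaction ::
  "('f, 'x) monoid_scheme \<Rightarrow> ('g, 'y) monoid_scheme \<Rightarrow> ('g \<Rightarrow> 'f \<Rightarrow> 'f) \<Rightarrow> ('g \<Rightarrow> 'g \<Rightarrow> 'f \<Rightarrow> 'k::field) \<Rightarrow>
   (('g \<times> 'f) \<times> 'a \<Rightarrow> 'k) \<Rightarrow> 'g \<times> 'f \<Rightarrow> (('g \<times> 'f) \<times> 'a \<Rightarrow> 'k)" where
  "induced_coaction F G act \<tau> Y b1 =
     (\<lambda>(b2, a). \<Sum>b\<in>vsupp (slice Y). H_Dc F G act \<tau> b b2 b1 * Y (b, a))"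

end

theory Submission
  imports Defs
begin

lemma sum_single:
  assumes "finite A" "\<And>x. x \<in> A \<Longrightarrow> x \<noteq> a \<Longrightarrow> h x = 0"
  shows "sum h A = (if a \<in> A then h a else 0)"
proof (cases "a \<in> A")
  case True
  have "sum h A = h a + sum h (A - {a})" using assms(1) True by (simp add: sum.remove)
  moreover have "sum h (A - {a}) = 0" using assms(2) by (intro sum.neutral) blast
  ultimately show ?thesis using True by simp
next
  case False
  have "sum h A = 0" using assms(2) False by (intro sum.neutral) blast
  thus ?thesis using False by simp
qed

lemma sum_nz: "sum h A \<noteq> 0 \<Longrightarrow> \<exists>x\<in>A. h x \<noteq> 0"
  using sum.neutral[of A h] by blast

lemma sc_zero[simp]: "sc 0 v = 0" "sc c 0 = 0" "sc 1 v = v"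
  by (auto simp: sc_def fun_eq_iff)

lemma sum_vsupp_single:
  assumes "finite (vsupp X)" "\<And>b. b \<noteq> b0 \<Longrightarrow> k b = 0"
  shows "(\<Sum>b\<in>vsupp X. sc (k b) (X b)) = sc (k b0) (X b0)"
proof -
  have "(\<Sum>b\<in>vsupp X. sc (k b) (X b)) = (if b0 \<in> vsupp X then sc (k b0) (X b0) else 0)"
    by (rule sum_single) (use assms in auto)
  thus ?thesis by (auto simp: vsupp_def)
qed

lemma mp_facts0:
  assumes "matched_pair_data F G act ract \<sigma> \<tau>"
  shows "group F" 
    "group G" 
    "finite (carrier G)" 
    "\<forall>g\<in>carrier G. \<forall>f\<in>carrier F. act g f \<in> carrier F" 
    "\<forall>f\<in>carrier F. act \<one>\<^bsub>G\<^esub> f = f" 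
    "\<forall>g\<in>carrier G. \<forall>g'\<in>carrier G. \<forall>f\<in>carrier F. act (g \<otimes>\<^bsub>G\<^esub> g') f = act g (act g' f)" 
    "\<forall>g\<in>carrier G. \<forall>f\<in>carrier F. ract g f \<in> carrier G" 
    "\<forall>g\<in>carrier G. \<forall>f\<in>carrier F. \<forall>f'\<in>carrier F. act g (f \<otimes>\<^bsub>F\<^esub> f') = act g f \<otimes>\<^bsub>F\<^esub> act (ract g f) f'" 
    "\<forall>g\<in>carrier G. \<forall>f\<in>carrier F. \<tau> \<one>\<^bsub>G\<^esub> g f = 1 \<and> \<tau> g \<one>\<^bsub>G\<^esub> f = 1" 
    "\<forall>g\<in>carrier G. ract g \<one>\<^bsub>F\<^esub> = g"
proof -
  note D = assms[unfolded matched_pair_data_def]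
  show "group F" using D by (elim conjE) assumption
  show "group G" using D by (elim conjE) assumption
  show "finite (carrier G)" using D by (elim conjE) assumption
  show "\<forall>g\<in>carrier G. \<forall>f\<in>carrier F. act g f \<in> carrier F" using D by (elim conjE) assumption
  show "\<forall>f\<in>carrier F. act \<one>\<^bsub>G\<^esub> f = f" using D by (elim conjE) assumption
  show "\<forall>g\<in>carrier G. \<forall>g'\<in>carrier G. \<forall>f\<in>carrier F. act (g \<otimes>\<^bsub>G\<^esub> g') f = act g (act g' f)" using D by (elim conjE) assumption
  show "\<forall>g\<in>carrier G. \<forall>f\<in>carrier F. ract g f \<in> carrier G" using D by (elim conjE) assumption
  show "\<forall>g\<in>carrier G. \<forall>f\<in>carrier F. \<forall>f'\<in>carrier F. act g (f \<otimes>\<^bsub>F\<^esub> f') = act g f \<otimes>\<^bsub>F\<^esub> act (ract g f) f'" using D by (elim conjE) assumption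
  show "\<forall>g\<in>carrier G. \<forall>f\<in>carrier F. \<tau> \<one>\<^bsub>G\<^esub> g f = 1 \<and> \<tau> g \<one>\<^bsub>G\<^esub> f = 1" using D by (elim conjE) assumption
  show "\<forall>g\<in>carrier G. ract g \<one>\<^bsub>F\<^esub> = g" using D by (elim conjE) assumption
qed

lemmas mp_facts = mp_facts0[rule_format]

lemma act_inv:
  assumes mp: "matched_pair_data F G act ract \<sigma> \<tau>" and g: "g \<in> carrier G" and x: "x \<in> carrier F"
  shows "inv\<^bsub>F\<^esub> (act g x) = act (ract g x) (inv\<^bsub>F\<^esub> x)"
proof -
  interpret F: group F using mp_facts[OF mp] by simp
  interpret G: group G using mp_facts[OF mp] by simp
  have one: "act h \<one>\<^bsub>F\<^esub> = \<one>\<^bsub>F\<^esub>" if h: "h \<in> carrier G" for h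
  proof -
    have "act h \<one>\<^bsub>F\<^esub> = act h (\<one>\<^bsub>F\<^esub> \<otimes>\<^bsub>F\<^esub> \<one>\<^bsub>F\<^esub>)" by simp
    also have "\<dots> = act h \<one>\<^bsub>F\<^esub> \<otimes>\<^bsub>F\<^esub> act (ract h \<one>\<^bsub>F\<^esub>) \<one>\<^bsub>F\<^esub>"
      by (rule mp_facts(8)[OF mp h F.one_closed F.one_closed])
    also have "ract h \<one>\<^bsub>F\<^esub> = h" using mp_facts(10)[OF mp h] .
    finally have "act h \<one>\<^bsub>F\<^esub> = act h \<one>\<^bsub>F\<^esub> \<otimes>\<^bsub>F\<^esub> act h \<one>\<^bsub>F\<^esub>" .
    thus ?thesis using mp_facts(4)[OF mp h F.one_closed] by simp
  qed
  have "act g x \<otimes>\<^bsub>F\<^esub> act (ract g x) (inv\<^bsub>F\<^esub> x) = act g (x \<otimes>\<^bsub>F\<^esub> inv\<^bsub>F\<^esub> x)"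
    using mp_facts(8)[OF mp g x F.inv_closed[OF x]] by simp
  also have "\<dots> = \<one>\<^bsub>F\<^esub>" using one[OF g] x by simp
  finally have e: "act g x \<otimes>\<^bsub>F\<^esub> act (ract g x) (inv\<^bsub>F\<^esub> x) = \<one>\<^bsub>F\<^esub>" .
  have c1: "act g x \<in> carrier F" using mp_facts(4)[OF mp g x] .
  have c2: "act (ract g x) (inv\<^bsub>F\<^esub> x) \<in> carrier F"
    using mp_facts(4)[OF mp mp_facts(7)[OF mp g x]] x by simp
  have "act (ract g x) (inv\<^bsub>F\<^esub> x) = inv\<^bsub>F\<^esub> (act g x) \<otimes>\<^bsub>F\<^esub> \<one>\<^bsub>F\<^esub>"
    using F.inv_solve_left[OF c2 c1 F.one_closed] e by simp
  thus ?thesis using c1 by simp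
qed

lemma induced_supp:
  assumes mp: "matched_pair_data F G act ract \<sigma> \<tau>" and fF: "f \<in> carrier F"
    and Y: "Y \<in> induced_space F G act \<tau> f V \<rho>"
    and b: "b \<in> vsupp (slice Y)"
  shows "b \<in> H_basis F G \<and> act (fst b) (snd b) = f"
proof -
  interpret F: group F using mp_facts[OF mp] by simp
  interpret G: group G using mp_facts[OF mp] by simp
  have bH: "b \<in> H_basis F G" using Y b unfolding induced_space_def by auto
  obtain g f' where bgf: "b = (g, f')" by (cases b)
  have g: "g \<in> carrier G" and f': "f' \<in> carrier F" using bH bgf by (auto simp: H_basis_def)
  define c where "c = (\<one>\<^bsub>G\<^esub>, act g f')"
  have cH: "c \<in> Hf_basis F G act f"
    using mp_facts(4,5)[OF mp] g f' fF by (auto simp: c_def Hf_basis_def stab_def)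
  have eq: "Vf_coaction f \<rho> (slice Y b) c =
            (\<Sum>b0\<in>vsupp (slice Y). sc (H_left_Hf F G act \<tau> f b0 c b) (slice Y b0))"
    using Y cH bH unfolding induced_space_def by auto
  have fin: "finite (vsupp (slice Y))" using Y unfolding induced_space_def by auto
  have "(\<Sum>b0\<in>vsupp (slice Y). sc (H_left_Hf F G act \<tau> f b0 c b) (slice Y b0))
        = sc (H_left_Hf F G act \<tau> f b c b) (slice Y b)"
  proof (rule sum_vsupp_single[OF fin])
    fix b0 assume ne: "b0 \<noteq> b"
    show "H_left_Hf F G act \<tau> f b0 c b = 0"
    proof (rule ccontr)
      assume "H_left_Hf F G act \<tau> f b0 c b \<noteq> 0"
      hence "b0 \<in> H_basis F G" "\<one>\<^bsub>G\<^esub> = fst b0 \<otimes>\<^bsub>G\<^esub> inv\<^bsub>G\<^esub> g" "snd b = snd b0"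
        by (auto simp: H_left_Hf_def H_Dc_def c_def bgf split: if_splits)
      moreover hence "fst b0 = g" using g G.inv_solve_right[of "\<one>\<^bsub>G\<^esub>" "fst b0" g]
        by (auto simp: H_basis_def mem_Times_iff)
      ultimately show False using ne bgf by (cases b0) auto
    qed
  qed
  also have "H_left_Hf F G act \<tau> f b c b = 1"
    using cH bH g f' mp_facts(9)[OF mp g f'] mp_facts(4)[OF mp g f']
    by (auto simp: H_left_Hf_def H_Dc_def c_def bgf H_basis_def)
  finally have "Vf_coaction f \<rho> (slice Y b) c = slice Y b" using eq by simp
  moreover have "slice Y b \<noteq> 0" using b by (simp add: vsupp_def)
  ultimately have "act g f' = f" by (auto simp: Vf_coaction_def c_def split: if_splits)
  thus ?thesis using bH bgf by simp
qed

lemma stab_facts: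
  assumes mp: "matched_pair_data F G act ract \<sigma> \<tau>" and fF: "f \<in> carrier F"
  shows "stab F G act f \<subseteq> carrier G"
    "\<And>x y. x \<in> stab F G act f \<Longrightarrow> y \<in> stab F G act f \<Longrightarrow> x \<otimes>\<^bsub>G\<^esub> y \<in> stab F G act f"
    "\<And>x. x \<in> stab F G act f \<Longrightarrow> inv\<^bsub>G\<^esub> x \<in> stab F G act f"
    "\<one>\<^bsub>G\<^esub> \<in> stab F G act f"
proof -
  interpret G: group G using mp_facts[OF mp] by simp
  show "stab F G act f \<subseteq> carrier G" by (auto simp: stab_def)
  show "\<one>\<^bsub>G\<^esub> \<in> stab F G act f" using mp_facts(5)[OF mp fF] by (simp add: stab_def)
  fix x y assume x: "x \<in> stab F G act f"
  then have xc: "x \<in> carrier G" and xf: "act x f = f" by (auto simp: stab_def)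
  have "act (inv\<^bsub>G\<^esub> x) f = act (inv\<^bsub>G\<^esub> x) (act x f)" using xf by simp
  also have "\<dots> = act (inv\<^bsub>G\<^esub> x \<otimes>\<^bsub>G\<^esub> x) f" using mp_facts(6)[OF mp G.inv_closed[OF xc] xc fF] xc by simp
  also have "\<dots> = f" using xc mp_facts(5)[OF mp fF] by simp
  finally show "inv\<^bsub>G\<^esub> x \<in> stab F G act f" using xc by (simp add: stab_def)
  assume y: "y \<in> stab F G act f"
  then have yc: "y \<in> carrier G" and yf: "act y f = f" by (auto simp: stab_def)
  show "x \<otimes>\<^bsub>G\<^esub> y \<in> stab F G act f"
    using mp_facts(6)[OF mp xc yc fF] xf yf xc yc by (simp add: stab_def)
qed

lemma induced_nonzero:
  assumes mp: "matched_pair_data F G act ract \<sigma> \<tau>" and fF: "f \<in> carrier F"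
    and simple: "simple_right_comodule (stab F G act f) (Gf_Dc F G act \<tau> f) (Gf_eps G) V \<rho>"
  shows "\<exists>Y\<in>induced_space F G act \<tau> f V \<rho>. \<exists>b. slice Y b \<noteq> 0"
proof -
  interpret G: group G using mp_facts[OF mp] by simp
  define S where "S = stab F G act f"
  have SG: "S \<subseteq> carrier G" and Smul: "\<And>x y. x \<in> S \<Longrightarrow> y \<in> S \<Longrightarrow> x \<otimes>\<^bsub>G\<^esub> y \<in> S"
    and Sinv: "\<And>x. x \<in> S \<Longrightarrow> inv\<^bsub>G\<^esub> x \<in> S"
    using stab_facts[OF mp fF] unfolding S_def by auto
  have rc: "right_comodule S (Gf_Dc F G act \<tau> f) (Gf_eps G) V \<rho>" and Vne: "V \<noteq> {0}"
    using simple unfolding simple_right_comodule_def S_def by auto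
  have V0: "0 \<in> V" using rc unfolding right_comodule_def subspace_def by auto
  have supp: "\<And>w. w \<in> V \<Longrightarrow> finite (vsupp (\<rho> w)) \<and> vsupp (\<rho> w) \<subseteq> S \<and> (\<forall>b. \<rho> w b \<in> V)"
    using rc unfolding right_comodule_def by auto
  have scal: "\<And>c w b. w \<in> V \<Longrightarrow> \<rho> (sc c w) b = sc c (\<rho> w b)"
    using rc unfolding right_comodule_def by auto
  have counit: "\<And>w. w \<in> V \<Longrightarrow> (\<Sum>b\<in>vsupp (\<rho> w). sc (Gf_eps G b) (\<rho> w b)) = w"
    using rc unfolding right_comodule_def by auto
  have coass: "\<And>w b1 b2. w \<in> V \<Longrightarrow> \<rho> (\<rho> w b1) b2 = (\<Sum>b\<in>vsupp (\<rho> w). sc (Gf_Dc F G act \<tau> f b b2 b1) (\<rho> w b))"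
    using rc unfolding right_comodule_def by auto
  have rho0: "\<rho> 0 b = 0" for b using scal[OF V0, of 0 b] by simp
  obtain v where v: "v \<in> V" "v \<noteq> 0" using Vne V0 by blast
  define Y where
    "Y = (\<lambda>(b, a). if snd b = f \<and> fst b \<in> S then \<rho> v (fst b) a else 0)"
  have sl: "slice Y b = (if snd b = f \<and> fst b \<in> S then \<rho> v (fst b) else 0)" for b
    by (cases b) (auto simp: slice_def Y_def fun_eq_iff)
  have vs: "vsupp (slice Y) \<subseteq> S \<times> {f}" by (auto simp: vsupp_def sl mem_Times_iff)
  have finS: "finite S" using SG mp_facts(3)[OF mp] finite_subset by blast
  have fin: "finite (vsupp (slice Y))" using vs finS finite_subset by blast
  have vsH: "vsupp (slice Y) \<subseteq> H_basis F G" using vs SG fF by (auto simp: H_basis_def)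
  have inV: "slice Y b \<in> V" for b using supp[OF v(1)] V0 by (simp add: sl)
  have cot: "Vf_coaction f \<rho> (slice Y b') c =
            (\<Sum>b\<in>vsupp (slice Y). sc (H_left_Hf F G act \<tau> f b c b') (slice Y b))"
    if c: "c \<in> Hf_basis F G act f" and b': "b' \<in> H_basis F G" for c b'
  proof -
    obtain x f1 where cx: "c = (x, f1)" by (cases c)
    obtain g' f2 where bg: "b' = (g', f2)" by (cases b')
    have x: "x \<in> S" and f1: "f1 \<in> carrier F" using c cx by (auto simp: Hf_basis_def S_def)
    have xc: "x \<in> carrier G" using x SG by auto
    have g': "g' \<in> carrier G" and f2: "f2 \<in> carrier F" using b' bg by (auto simp: H_basis_def)
    have xg: "x \<otimes>\<^bsub>G\<^esub> g' \<in> carrier G" using xc g' by simp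
    have xgi: "x \<otimes>\<^bsub>G\<^esub> g' \<otimes>\<^bsub>G\<^esub> inv\<^bsub>G\<^esub> g' = x" using xc g' by (simp add: G.m_assoc)
    have "(\<Sum>b\<in>vsupp (slice Y). sc (H_left_Hf F G act \<tau> f b c b') (slice Y b))
          = sc (H_left_Hf F G act \<tau> f (x \<otimes>\<^bsub>G\<^esub> g', f2) c b') (slice Y (x \<otimes>\<^bsub>G\<^esub> g', f2))"
    proof (rule sum_vsupp_single[OF fin])
      fix b assume ne: "b \<noteq> (x \<otimes>\<^bsub>G\<^esub> g', f2)"
      show "H_left_Hf F G act \<tau> f b c b' = 0"
      proof (rule ccontr)
        assume "H_left_Hf F G act \<tau> f b c b' \<noteq> 0"
        hence hb: "b \<in> H_basis F G" "x = fst b \<otimes>\<^bsub>G\<^esub> inv\<^bsub>G\<^esub> g'" "f2 = snd b"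
          by (auto simp: H_left_Hf_def H_Dc_def cx bg split: if_splits)
        have "fst b \<in> carrier G" using hb(1) by (auto simp: H_basis_def mem_Times_iff)
        hence "fst b = x \<otimes>\<^bsub>G\<^esub> g'" using G.inv_solve_right[OF xc _ g'] hb(2) by blast
        thus False using ne hb(3) by (cases b) auto
      qed
    qed
    also have "H_left_Hf F G act \<tau> f (x \<otimes>\<^bsub>G\<^esub> g', f2) c b' = (if f1 = act g' f2 then \<tau> x g' f2 else 0)"
      using c b' xg f2 xgi xc f1 by (auto simp: H_left_Hf_def H_Dc_def cx bg H_basis_def)
    finally have R: "(\<Sum>b\<in>vsupp (slice Y). sc (H_left_Hf F G act \<tau> f b c b') (slice Y b))
        = sc (if f1 = act g' f2 then \<tau> x g' f2 else 0) (slice Y (x \<otimes>\<^bsub>G\<^esub> g', f2))" .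
    have L: "Vf_coaction f \<rho> (slice Y b') c = (if f1 = f then \<rho> (slice Y (g', f2)) x else 0)"
      by (simp add: Vf_coaction_def cx bg)
    show ?thesis
    proof (cases "f2 = f")
      case False thus ?thesis using R L by (simp add: sl bg rho0)
    next
      case True
      show ?thesis
      proof (cases "g' \<in> S")
        case False
        have "x \<otimes>\<^bsub>G\<^esub> g' \<notin> S"
        proof
          assume "x \<otimes>\<^bsub>G\<^esub> g' \<in> S"
          hence "inv\<^bsub>G\<^esub> x \<otimes>\<^bsub>G\<^esub> (x \<otimes>\<^bsub>G\<^esub> g') \<in> S" using Smul Sinv x by blast
          thus False using False xc g' by (simp add: G.m_assoc[symmetric])
        qed
        thus ?thesis using R L False True by (simp add: sl bg rho0)
      next
        case gS: True
        have xgS: "x \<otimes>\<^bsub>G\<^esub> g' \<in> S" using Smul x gS by blast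
        have agf: "act g' f = f" using gS by (simp add: S_def stab_def)
        show ?thesis
        proof (cases "f1 = f")
          case False thus ?thesis using R L True agf by (simp add: sl bg)
        next
          case f1f: True
          have "\<rho> (\<rho> v g') x = (\<Sum>b\<in>vsupp (\<rho> v). sc (Gf_Dc F G act \<tau> f b x g') (\<rho> v b))"
            using coass[OF v(1)] .
          also have "\<dots> = sc (Gf_Dc F G act \<tau> f (x \<otimes>\<^bsub>G\<^esub> g') x g') (\<rho> v (x \<otimes>\<^bsub>G\<^esub> g'))"
          proof (rule sum_vsupp_single)
            show "finite (vsupp (\<rho> v))" using supp[OF v(1)] by simp
            fix b assume ne: "b \<noteq> x \<otimes>\<^bsub>G\<^esub> g'"
            show "Gf_Dc F G act \<tau> f b x g' = 0"
            proof (rule ccontr)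
              assume "Gf_Dc F G act \<tau> f b x g' \<noteq> 0"
              hence hb: "b \<in> S" "x = b \<otimes>\<^bsub>G\<^esub> inv\<^bsub>G\<^esub> g'"
                by (auto simp: Gf_Dc_def S_def split: if_splits)
              have "b \<in> carrier G" using hb(1) SG by auto
              hence "b = x \<otimes>\<^bsub>G\<^esub> g'" using G.inv_solve_right[OF xc _ g'] hb(2) by blast
              thus False using ne by simp
            qed
          qed
          also have "Gf_Dc F G act \<tau> f (x \<otimes>\<^bsub>G\<^esub> g') x g' = \<tau> x g' f"
            using xgS x gS xgi by (simp add: Gf_Dc_def S_def)
          finally show ?thesis using R L True f1f agf gS xgS by (simp add: sl bg)
        qed
      qed
    qed
  qed
  have YV: "Y \<in> induced_space F G act \<tau> f V \<rho>"
    unfolding induced_space_def using inV fin vsH cot by blast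
  have "vsupp (\<rho> v) \<noteq> {}"
  proof
    assume "vsupp (\<rho> v) = {}"
    hence "v = 0" using counit[OF v(1)] by simp
    thus False using v(2) by simp
  qed
  then obtain g0 where g0: "g0 \<in> vsupp (\<rho> v)" by blast
  hence "g0 \<in> S" using supp[OF v(1)] by blast
  hence "slice Y (g0, f) \<noteq> 0" using g0 by (simp add: sl vsupp_def)
  thus ?thesis using YV by blast
qed

theorem corollary5p7:
  fixes F :: "('f, 'x) monoid_scheme" and G :: "('g, 'y) monoid_scheme"
    and act :: "'g \<Rightarrow> 'f \<Rightarrow> 'f" and ract :: "'g \<Rightarrow> 'f \<Rightarrow> 'g"
    and \<sigma> :: "'g \<Rightarrow> 'f \<Rightarrow> 'f \<Rightarrow> 'k::field_char_0" and \<tau> :: "'g \<Rightarrow> 'g \<Rightarrow> 'f \<Rightarrow> 'k"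
    and f :: 'f
    and V :: "('a \<Rightarrow> 'k) set" and \<rho> :: "('a \<Rightarrow> 'k) \<Rightarrow> 'g \<Rightarrow> ('a \<Rightarrow> 'k)"
  assumes "alg_closed_field TYPE('k)"
    and "matched_pair_data F G act ract \<sigma> \<tau>"
    and "f \<in> carrier F"
    and "simple_right_comodule (stab F G act f) (Gf_Dc F G act \<tau> f) (Gf_eps G) V \<rho>"
    and "comodule_iso
           (dual_space (induced_space F G act \<tau> f V \<rho>))
           (dual_coaction (H_Sc F G act ract \<sigma> \<tau>) (induced_space F G act \<tau> f V \<rho>) (induced_coaction F G act \<tau>))
           (induced_space F G act \<tau> f V \<rho>)
           (induced_coaction F G act \<tau>)"
  shows "{g \<in> carrier G. act g f = inv\<^bsub>F\<^esub> f} \<noteq> {}"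
proof -
  note mp = assms(2) and fF = assms(3)
  interpret F: group F using mp_facts[OF mp] by simp
  interpret G: group G using mp_facts[OF mp] by simp
  define W where "W = induced_space F G act \<tau> f V \<rho>"
  define rW where "rW = (induced_coaction F G act \<tau> :: ((_ \<times> _) \<times> 'a \<Rightarrow> 'k) \<Rightarrow> _)"
  obtain Y b0 where Y: "Y \<in> W" and b0: "slice Y b0 \<noteq> 0"
    using induced_nonzero[OF mp fF assms(4)] unfolding W_def by blast
  have b0s: "b0 \<in> vsupp (slice Y)" using b0 by (simp add: vsupp_def)
  have b0H: "b0 \<in> H_basis F G" and b0f: "act (fst b0) (snd b0) = f"
    using induced_supp[OF mp fF Y[unfolded W_def] b0s] by auto
  obtain g f' where b0gf: "b0 = (g, f')" by (cases b0)
  have g: "g \<in> carrier G" and f': "f' \<in> carrier F" using b0H b0gf by (auto simp: H_basis_def)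
  have agf: "act g f' = f" using b0f b0gf by simp
  define b1 where "b1 = (\<one>\<^bsub>G\<^esub>, f')"
  obtain a where a: "Y (b0, a) \<noteq> 0" using b0 by (auto simp: slice_def fun_eq_iff)
  have finY: "finite (vsupp (slice Y))" using Y unfolding W_def induced_space_def by auto
  have vsYH: "vsupp (slice Y) \<subseteq> H_basis F G" using Y unfolding W_def induced_space_def by auto
  have "rW Y b1 (b0, a) = (\<Sum>b\<in>vsupp (slice Y). H_Dc F G act \<tau> b b0 b1 * Y (b, a))"
    by (simp add: rW_def induced_coaction_def)
  also have "\<dots> = (if b0 \<in> vsupp (slice Y) then H_Dc F G act \<tau> b0 b0 b1 * Y (b0, a) else 0)"
  proof (rule sum_single[OF finY])
    fix b assume bY: "b \<in> vsupp (slice Y)" and ne: "b \<noteq> b0"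
    have bc: "fst b \<in> carrier G" using bY vsYH by (auto simp: H_basis_def mem_Times_iff)
    have "H_Dc F G act \<tau> b b0 b1 = 0"
    proof (rule ccontr)
      assume "H_Dc F G act \<tau> b b0 b1 \<noteq> 0"
      hence "g = fst b \<otimes>\<^bsub>G\<^esub> inv\<^bsub>G\<^esub> \<one>\<^bsub>G\<^esub>" "f' = snd b"
        by (auto simp: H_Dc_def b0gf b1_def split: if_splits)
      hence "b = b0" using bc b0gf by (cases b) auto
      thus False using ne by simp
    qed
    thus "H_Dc F G act \<tau> b b0 b1 * Y (b, a) = 0" by simp
  qed
  also have "H_Dc F G act \<tau> b0 b0 b1 = 1"
    using g f' mp_facts(5,9)[OF mp] b0H by (simp add: H_Dc_def b0gf b1_def H_basis_def)
  finally have "rW Y b1 (b0, a) = Y (b0, a)" using b0s by simp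
  hence rWne: "rW Y b1 \<noteq> 0" using a by auto
  obtain T where Tb: "bij_betw T (dual_space W) W" and Tl: "is_linear_map (dual_space W) T"
    and Tc: "\<forall>w\<in>dual_space W. \<forall>b. T (dual_coaction (H_Sc F G act ract \<sigma> \<tau>) W rW w b) = rW (T w) b"
    using assms(5) unfolding comodule_iso_def W_def rW_def by blast
  obtain \<phi> where \<phi>: "\<phi> \<in> dual_space W" "T \<phi> = Y" using Tb Y unfolding bij_betw_def by (metis imageE)
  have T0: "T 0 = 0"
  proof -
    have "T (sc 0 \<phi>) = sc 0 (T \<phi>)" using Tl \<phi>(1) unfolding is_linear_map_def by blast
    thus ?thesis by simp
  qed
  have "dual_coaction (H_Sc F G act ract \<sigma> \<tau>) W rW \<phi> b1 \<noteq> 0"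
  proof
    assume "dual_coaction (H_Sc F G act ract \<sigma> \<tau>) W rW \<phi> b1 = 0"
    hence "rW Y b1 = 0" using Tc \<phi> T0 by metis
    thus False using rWne by simp
  qed
  then obtain w where "dual_coaction (H_Sc F G act ract \<sigma> \<tau>) W rW \<phi> b1 w \<noteq> 0"
    by (auto simp: fun_eq_iff)
  hence wW: "w \<in> W" and "(\<Sum>b'\<in>vsupp (rW w). \<phi> (rW w b') * H_Sc F G act ract \<sigma> \<tau> b' b1) \<noteq> 0"
    by (auto simp: dual_coaction_def split: if_splits)
  then obtain b' where b'v: "b' \<in> vsupp (rW w)" and Sc: "H_Sc F G act ract \<sigma> \<tau> b' b1 \<noteq> 0"
    using sum_nz by fastforce
  obtain g' f'' where b'gf: "b' = (g', f'')" by (cases b')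
  have b'H: "b' \<in> H_basis F G" and b1eq: "b1 = (inv\<^bsub>G\<^esub> (ract g' f''), inv\<^bsub>F\<^esub> (act g' f''))"
    using Sc by (auto simp: H_Sc_def Let_def b'gf split: if_splits)
  have g': "g' \<in> carrier G" and f'': "f'' \<in> carrier F" using b'H b'gf by (auto simp: H_basis_def)
  have f'eq: "f' = inv\<^bsub>F\<^esub> (act g' f'')" using b1eq by (simp add: b1_def)
  from b'v obtain p where "rW w b' p \<noteq> 0" by (auto simp: vsupp_def fun_eq_iff)
  then obtain b2 a2 where "rW w b' (b2, a2) \<noteq> 0" by (cases p) auto
  hence "(\<Sum>b\<in>vsupp (slice w). H_Dc F G act \<tau> b b2 b' * w (b, a2)) \<noteq> 0"
    by (simp add: rW_def induced_coaction_def)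
  then obtain bb where bb: "bb \<in> vsupp (slice w)" and "H_Dc F G act \<tau> bb b2 b' * w (bb, a2) \<noteq> 0"
    using sum_nz by fastforce
  hence "H_Dc F G act \<tau> bb b2 b' \<noteq> 0" by auto
  hence sbb: "snd bb = f''" by (auto simp: H_Dc_def b'gf split: if_splits)
  have bbH: "bb \<in> H_basis F G" and bbf: "act (fst bb) (snd bb) = f"
    using induced_supp[OF mp fF wW[unfolded W_def] bb] by auto
  define k where "k = fst bb"
  have k: "k \<in> carrier G" using bbH by (auto simp: k_def H_basis_def mem_Times_iff)
  have akf: "act k f'' = f" using bbf sbb by (simp add: k_def)
  have bck: "act (inv\<^bsub>G\<^esub> h) f = y" if h: "h \<in> carrier G" and y: "y \<in> carrier F" and e: "act h y = f" for h y
  proof -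
    have "act (inv\<^bsub>G\<^esub> h) f = act (inv\<^bsub>G\<^esub> h) (act h y)" using e by simp
    also have "\<dots> = act (inv\<^bsub>G\<^esub> h \<otimes>\<^bsub>G\<^esub> h) y" using mp_facts(6)[OF mp G.inv_closed[OF h] h y] by simp
    also have "\<dots> = y" using h y mp_facts(5)[OF mp y] by simp
    finally show ?thesis .
  qed
  have f''eq: "f'' = act (inv\<^bsub>G\<^esub> k) f" using bck[OF k f'' akf] by simp
  have f'eq2: "f' = act (inv\<^bsub>G\<^esub> g) f" using bck[OF g f' agf] by simp
  define m where "m = g' \<otimes>\<^bsub>G\<^esub> inv\<^bsub>G\<^esub> k"
  have m: "m \<in> carrier G" using g' k by (simp add: m_def)
  have "act g' f'' = act m f" using f''eq mp_facts(6)[OF mp g' G.inv_closed[OF k] fF] by (simp add: m_def)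
  hence f'r: "f' = act (ract m f) (inv\<^bsub>F\<^esub> f)" using f'eq act_inv[OF mp m fF] by simp
  define r where "r = ract m f"
  have r: "r \<in> carrier G" using mp_facts(7)[OF mp m fF] by (simp add: r_def)
  have e2: "act (inv\<^bsub>G\<^esub> g) f = act r (inv\<^bsub>F\<^esub> f)" using f'eq2 f'r by (simp add: r_def)
  have "act (inv\<^bsub>G\<^esub> r \<otimes>\<^bsub>G\<^esub> inv\<^bsub>G\<^esub> g) f = act (inv\<^bsub>G\<^esub> r) (act (inv\<^bsub>G\<^esub> g) f)"
    using mp_facts(6)[OF mp G.inv_closed[OF r] G.inv_closed[OF g] fF] .
  also have "\<dots> = act (inv\<^bsub>G\<^esub> r) (act r (inv\<^bsub>F\<^esub> f))" using e2 by simp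
  also have "\<dots> = act (inv\<^bsub>G\<^esub> r \<otimes>\<^bsub>G\<^esub> r) (inv\<^bsub>F\<^esub> f)"
    using mp_facts(6)[OF mp G.inv_closed[OF r] r F.inv_closed[OF fF]] by simp
  also have "\<dots> = inv\<^bsub>F\<^esub> f" using r mp_facts(5)[OF mp F.inv_closed[OF fF]] by simp
  finally have "inv\<^bsub>G\<^esub> r \<otimes>\<^bsub>G\<^esub> inv\<^bsub>G\<^esub> g \<in> {g \<in> carrier G. act g f = inv\<^bsub>F\<^esub> f}"
    using r g by simp
  thus ?thesis by blast
qed

end
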